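(* Let $b\ge 2$ and $n\ge 1$ be integers. Then $$\mathrm{Ap}(T_b(n),s_0)=\Big\{\sum_{j=1}^{n+1} t_j s_j \;:\; (t_1,\dots,t_{n+1})\in R_b(n)\Big\}.$$
   Context: For integers $b\ge 2$, $n\ge 0$, $i\ge0$ put $s_i=(b+1)b^{n+i}-1$ and $T_b(n)=\langle\{s_i:i\in\mathbb{N}\}\rangle$ (the submonoid of $(\mathbb{N},+)$ generated by the $s_i$; it is a numerical semigroup). For a numerical semigroup $S$ and $x\in S\setminus\{0\}$, the Apéry set is $\mathrm{Ap}(S,x)=\{s\in S : s-x\notin S\}$. $R_b(n)$ is the set of tuples $(t_1,\dots,t_{n+1})\in\{0,1,\dots,b\}^{n+1}$ satisfying: (i) $t_{n+1}\le b-1$; (ii) if $t_j=b$ for some $j$, then $t_i=0$ for all $i<j$; (iii) if $t_{n+1}=b-1$, then $t_n\le b-1$, and if moreover $t_n=b-1$, then $t_1=\dots=t_{n-1}=0$. *)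

theory Defs
  imports Main
begin

inductive_set monoid_gen :: "nat set \<Rightarrow> nat set" for A :: "nat set" where
  zero: "0 \<in> monoid_gen A"
| add: "x \<in> monoid_gen A \<Longrightarrow> a \<in> A \<Longrightarrow> x + a \<in> monoid_gen A"

definition s_gen :: "nat \<Rightarrow> nat \<Rightarrow> nat \<Rightarrow> nat" where
  "s_gen b n i = (b + 1) * b ^ (n + i) - 1"

definition T_sg :: "nat \<Rightarrow> nat \<Rightarrow> nat set" where
  "T_sg b n = monoid_gen (range (s_gen b n))"

definition Apery :: "nat set \<Rightarrow> nat \<Rightarrow> nat set" where
  "Apery S x = {s \<in> S. \<not> (s \<ge> x \<and> s - x \<in> S)}"

text \<open>Tuples (t_1,...,t_{n+1}) represented as functions on {1..n+1}, zero elsewhere.\<close>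
definition R_set :: "nat \<Rightarrow> nat \<Rightarrow> (nat \<Rightarrow> nat) set" where
  "R_set b n = {t. (\<forall>j. j \<notin> {1..n+1} \<longrightarrow> t j = 0)
     \<and> (\<forall>j\<in>{1..n+1}. t j \<le> b)
     \<and> t (n+1) \<le> b - 1
     \<and> (\<forall>j\<in>{1..n+1}. t j = b \<longrightarrow> (\<forall>i\<in>{1..<j}. t i = 0))
     \<and> (t (n+1) = b - 1 \<longrightarrow> t n \<le> b - 1 \<and>
          (t n = b - 1 \<longrightarrow> (\<forall>i\<in>{1..n-1}. t i = 0)))}"

end

theory Submission imports Defs "HOL-Number_Theory.Cong" begin
fun ee :: "nat \<Rightarrow> nat \<Rightarrow> nat" where
  "ee b 0 = 0" | "ee b (Suc j) = b * ee b j + 1"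

function ds :: "nat \<Rightarrow> nat \<Rightarrow> nat" where
  "ds b x = (if b \<le> 1 \<or> x = 0 then 0 else x mod b + ds b (x div b))"
  by auto
termination by (relation "measure snd") auto

declare ds.simps[simp del]

lemma ds_zero[simp]: "ds b 0 = 0"
  by (subst ds.simps) auto

lemma ds_eq: "b \<ge> 2 \<Longrightarrow> ds b x = x mod b + ds b (x div b)"
  by (cases "x = 0") (subst ds.simps; auto)+

lemma ds_small: "b \<ge> 2 \<Longrightarrow> c < b \<Longrightarrow> ds b c = c"
  by (subst ds_eq) auto

lemma ds_suc: assumes "b \<ge> 2" shows "ds b (x + 1) \<le> ds b x + 1"
  using assms
proof (induction x rule: less_induct)
  case (less x)
  show ?case
  proof (cases "x mod b < b - 1")
    case True
    then have "(x+1) mod b = x mod b + 1" "(x+1) div b = x div b"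
      using less.prems by (simp_all add: mod_Suc div_Suc)
    then show ?thesis using ds_eq[OF less.prems, of "x+1"] ds_eq[OF less.prems, of x] by simp
  next
    case False
    then have m: "x mod b = b - 1" using less.prems
      using mod_less_divisor[of b x] by linarith
    then have "(x+1) mod b = 0" "(x+1) div b = x div b + 1"
      using less.prems by (simp_all add: mod_Suc div_Suc)
    moreover have "x \<noteq> 0" using m less.prems by (cases "x = 0") auto
    then have "ds b (x div b + 1) \<le> ds b (x div b) + 1" using less by auto
    ultimately show ?thesis using ds_eq[OF less.prems, of "x+1"] ds_eq[OF less.prems, of x] m by simp
  qed
qed

lemma ds_pow: assumes "b \<ge> 2" shows "ds b (x + b^i) \<le> ds b x + 1"
  using assms
proof (induction i arbitrary: x)
  case 0 then show ?case using ds_suc by simp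
next
  case (Suc i)
  have "(x + b^Suc i) mod b = x mod b" by simp
  moreover have "(x + b^Suc i) div b = x div b + b^i" using Suc.prems by simp
  ultimately show ?case using ds_eq[OF Suc.prems, of "x + b^Suc i"] ds_eq[OF Suc.prems, of x]
      Suc.IH[OF Suc.prems, of "x div b"] by simp
qed

lemma ds_dec: assumes "b \<ge> 2" "1 \<le> d" "d \<le> y" shows "ds b (y - 1) \<le> ds b (y - d) + (d - 1)"
  using assms(2,3)
proof (induction d rule: dec_induct)
  case base then show ?case by simp
next
  case (step d)
  have "ds b (y - d) \<le> ds b (y - Suc d) + 1"
    using ds_suc[OF assms(1), of "y - Suc d"] step by (simp add: Suc_diff_Suc)
  then show ?case using step by simp
qed

lemma ds_shift: assumes "b \<ge> 2" "a < b^k" shows "ds b (a + b^k * c) = ds b a + ds b c"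
  using assms(2)
proof (induction k arbitrary: a)
  case 0 then show ?case by simp
next
  case (Suc k)
  have "(a + b^Suc k * c) mod b = a mod b" by (simp add: mult.assoc)
  moreover have "(a + b^Suc k * c) div b = a div b + b^k * c" using assms(1)
    by (simp add: mult.assoc)
  moreover have "a div b < b^k" using Suc.prems assms(1)
    by (simp add: div_less_iff_less_mult mult.commute)
  ultimately show ?case using ds_eq[OF assms(1), of "a + b^Suc k * c"] ds_eq[OF assms(1), of a]
      Suc.IH[of "a div b"] by simp
qed

lemma ds_pm: assumes "b \<ge> 2" shows "ds b (b^k - 1) = k * (b - 1)"
proof (induction k)
  case 0 then show ?case by simp
next
  case (Suc k)
  have pk: "b^k \<ge> 1" using assms by simp
  have e: "b^Suc k - 1 = (b - 1) + b^1 * (b^k - 1)" using pk assms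
    by (simp add: algebra_simps diff_mult_distrib2)
  have "ds b (b^Suc k - 1) = ds b (b - 1) + ds b (b^k - 1)"
    unfolding e by (rule ds_shift) (use assms in auto)
  then show ?case using Suc ds_small[OF assms, of "b - 1"] assms by simp
qed


lemma ee_pow: assumes "b \<ge> 1" shows "b^j = (b - 1) * ee b j + 1"
proof -
  obtain c where b: "b = Suc c" using assms by (cases b) auto
  show ?thesis unfolding b by (induction j) (auto simp: algebra_simps)
qed

lemma ee_pos: "j \<ge> 1 \<Longrightarrow> ee b j \<ge> 1"
  by (cases j) auto

definition canon :: "nat \<Rightarrow> nat \<Rightarrow> (nat \<Rightarrow> nat) \<Rightarrow> bool" where
  "canon b N t \<longleftrightarrow> (\<forall>j\<in>{1..N}. t j \<le> b) \<and> (\<forall>j\<in>{1..N}. t j = b \<longrightarrow> (\<forall>i\<in>{1..<j}. t i = 0))"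

lemma canon_mono: assumes "canon b N t" "M \<le> N" shows "canon b M t"
proof -
  have s: "{1..M} \<subseteq> {1..N}" using assms(2) by auto
  show ?thesis using assms(1) s unfolding canon_def by blast
qed

lemma canon_le: "canon b N t \<Longrightarrow> j \<in> {1..N} \<Longrightarrow> t j \<le> b"
  unfolding canon_def by blast

lemma canon_low: "canon b N t \<Longrightarrow> j \<in> {1..N} \<Longrightarrow> t j = b \<Longrightarrow> i \<in> {1..<j} \<Longrightarrow> t i = 0"
  unfolding canon_def by blast

lemma canonI: "(\<And>j. j \<in> {1..N} \<Longrightarrow> t j \<le> b) \<Longrightarrow>
   (\<And>j i. j \<in> {1..N} \<Longrightarrow> t j = b \<Longrightarrow> i \<in> {1..<j} \<Longrightarrow> t i = 0) \<Longrightarrow> canon b N t"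
  unfolding canon_def by blast

lemma sum_zero_e: "(\<Sum>j=1..N. t j * ee b j) = 0 \<Longrightarrow> i \<in> {1..N} \<Longrightarrow> t i = 0"
  using ee_pos[of i b] by auto

lemma sum_zero_d: fixes t :: "nat \<Rightarrow> nat" assumes "(\<Sum>j=1..N. t j) = 0" "i \<in> {1..N}" shows "t i = 0"
proof -
  have "t i \<le> (\<Sum>j=1..N. t j)" by (rule member_le_sum) (use assms(2) in auto)
  then show ?thesis using assms(1) by simp
qed

lemma canon_bound: assumes "b \<ge> 1" "canon b N t" shows "(\<Sum>j=1..N. t j * ee b j) \<le> b * ee b N"
  using assms(2)
proof (induction N)
  case 0 then show ?case by simp
next
  case (Suc N)
  have c: "canon b N t" using Suc.prems canon_mono by auto
  have tb: "t (Suc N) \<le> b" using canon_le[OF Suc.prems, of "Suc N"] by simp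
  show ?case
  proof (cases "t (Suc N) = b")
    case True
    then have "\<forall>i\<in>{1..N}. t i = 0" using canon_low[OF Suc.prems, of "Suc N"] by simp
    then have "(\<Sum>j=1..N. t j * ee b j) = 0" by simp
    then show ?thesis using True by (simp add: sum.cl_ivl_Suc)
  next
    case False
    then have "t (Suc N) \<le> b - 1" using tb by simp
    then have "t (Suc N) * ee b (Suc N) \<le> (b - 1) * ee b (Suc N)" by (rule mult_right_mono) simp
    moreover have "(\<Sum>j=1..N. t j * ee b j) \<le> b * ee b N" using Suc.IH c by simp
    moreover have "b * ee b N + (b - 1) * ee b (Suc N) \<le> b * ee b (Suc N)"
    proof -
      obtain c where bc: "b = Suc c" using assms(1) by (cases b) auto
      show ?thesis unfolding bc by (simp add: algebra_simps)
    qed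
    moreover have "(\<Sum>j=1..Suc N. t j * ee b j) = (\<Sum>j=1..N. t j * ee b j) + t (Suc N) * ee b (Suc N)"
      by (simp add: sum.cl_ivl_Suc del: ee.simps)
    ultimately show ?thesis by linarith
  qed
qed


lemma canon_exists: assumes "b \<ge> 1" "G \<le> b * ee b N"
  shows "\<exists>t. canon b N t \<and> (\<forall>j. j \<notin> {1..N} \<longrightarrow> t j = 0) \<and> (\<Sum>j=1..N. t j * ee b j) = G"
  using assms(2)
proof (induction N arbitrary: G)
  case 0
  then show ?case by (intro exI[of _ "\<lambda>_. 0"]) (auto intro: canonI)
next
  case (Suc N)
  define e' where "e' = ee b (Suc N)"
  have ep: "e' \<ge> 1" unfolding e'_def by simp
  define q where "q = G div e'"
  define r where "r = G mod e'"
  have Gqr: "G = q * e' + r" unfolding q_def r_def by simp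
  have "r < e'" unfolding r_def using ep by simp
  then have "r \<le> b * ee b N" unfolding e'_def by simp
  then obtain t0 where t0: "canon b N t0" "\<forall>j. j \<notin> {1..N} \<longrightarrow> t0 j = 0" "(\<Sum>j=1..N. t0 j * ee b j) = r"
    using Suc.IH by blast
  have "q * e' \<le> b * e'" using Gqr Suc.prems unfolding e'_def by simp
  then have qb: "q \<le> b" using ep by simp
  have qr: "q = b \<Longrightarrow> r = 0" using Gqr Suc.prems unfolding e'_def by simp
  define t where "t = t0(Suc N := q)"
  have sumeq: "(\<Sum>j=1..N. t j * ee b j) = r"
    using t0(3) by (simp add: t_def)
  have "(\<Sum>j=1..Suc N. t j * ee b j) = G"
    using sumeq Gqr by (simp add: sum.cl_ivl_Suc t_def e'_def)
  moreover have "\<forall>j. j \<notin> {1..Suc N} \<longrightarrow> t j = 0"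
  proof (intro allI impI)
    fix j assume "j \<notin> {1..Suc N}"
    then have "j \<notin> {1..N}" "j \<noteq> Suc N" by auto
    then show "t j = 0" using t0(2) by (simp add: t_def)
  qed
  moreover have "canon b (Suc N) t"
  proof (rule canonI)
    fix j assume j: "j \<in> {1..Suc N}"
    show "t j \<le> b"
    proof (cases "j = Suc N")
      case True then show ?thesis using qb by (simp add: t_def)
    next
      case False
      then have "j \<in> {1..N}" using j by auto
      then show ?thesis using canon_le[OF t0(1)] False by (simp add: t_def)
    qed
  next
    fix j i assume j: "j \<in> {1..Suc N}" and tj: "t j = b" and i: "i \<in> {1..<j}"
    show "t i = 0"
    proof (cases "j = Suc N")
      case True
      then have "r = 0" using qr tj by (simp add: t_def)
      then have "t0 i = 0" using sum_zero_e[where N=N and t=t0 and b=b and i=i] t0(3) i True by auto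
      then show ?thesis using i True by (simp add: t_def)
    next
      case False
      then have jN: "j \<in> {1..N}" using j by auto
      have iN: "i \<noteq> Suc N" using i jN by auto
      have "t0 j = b" using tj False by (simp add: t_def)
      then have "t0 i = 0" using canon_low[OF t0(1) jN _ i] by blast
      then show ?thesis using iN by (simp add: t_def)
    qed
  qed
  ultimately show ?case by blast
qed

lemma canon_ds: assumes "b \<ge> 2" "canon b N t"
  shows "(\<Sum>j=1..N. t j * b^j) \<le> b^(Suc N) \<and>
     ((\<Sum>j=1..N. t j) \<ge> 1 \<longrightarrow> (\<Sum>j=1..N. t j) \<le> ds b ((\<Sum>j=1..N. t j * b^j) - 1))"
  using assms(2)
proof (induction N)
  case 0 then show ?case using assms by simp
next
  case (Suc N)
  define M where "M = (\<Sum>j=1..N. t j * b^j)"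
  define D where "D = (\<Sum>j=1..N. t j)"
  define T where "T = t (Suc N)"
  have c: "canon b N t" using Suc.prems canon_mono by auto
  have IH: "M \<le> b^Suc N" "D \<ge> 1 \<Longrightarrow> D \<le> ds b (M - 1)" using Suc.IH[OF c] unfolding M_def D_def by auto
  have TB: "T \<le> b" using canon_le[OF Suc.prems, of "Suc N"] unfolding T_def by simp
  have M': "(\<Sum>j=1..Suc N. t j * b^j) = M + T * b^Suc N" by (simp add: M_def T_def sum.cl_ivl_Suc)
  have D': "(\<Sum>j=1..Suc N. t j) = D + T" by (simp add: D_def T_def sum.cl_ivl_Suc)
  have MD: "D \<le> M" unfolding M_def D_def
    by (rule sum_mono) (use assms in simp)
  show ?case
  proof (cases "D = 0")
    case True
    then have "\<forall>i\<in>{1..N}. t i = 0" using sum_zero_d unfolding D_def by blast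
    then have M0: "M = 0" unfolding M_def by simp
    have "T * b^Suc N \<le> b * b^Suc N" using TB by simp
    moreover have "D + T \<ge> 1 \<longrightarrow> D + T \<le> ds b (T * b^Suc N - 1)"
    proof
      assume "D + T \<ge> 1"
      then have T1: "T \<ge> 1" using True by simp
      have pp: "b^Suc N \<ge> 1" using assms by simp
      have e: "T * b^Suc N - 1 = (b^Suc N - 1) + b^Suc N * (T - 1)"
        using T1 pp by (simp add: algebra_simps diff_mult_distrib2)
      have "ds b (T * b^Suc N - 1) = ds b (b^Suc N - 1) + ds b (T - 1)"
        unfolding e by (rule ds_shift) (use assms pp in auto)
      also have "\<dots> = Suc N * (b - 1) + (T - 1)" using ds_pm[OF assms(1), of "Suc N"] ds_small[OF assms(1), of "T - 1"] TB T1
        by (simp del: power_Suc)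
      finally have X: "ds b (T * b^Suc N - 1) = Suc N * (b - 1) + (T - 1)" .
      have "Suc N * (b - 1) \<ge> 1" using assms by simp
      then show "D + T \<le> ds b (T * b^Suc N - 1)" using True T1 X by linarith
    qed
    ultimately show ?thesis using M' D' M0 by simp
  next
    case False
    have "\<exists>i\<in>{1..N}. t i \<noteq> 0"
    proof (rule ccontr)
      assume "\<not> (\<exists>i\<in>{1..N}. t i \<noteq> 0)"
      then have "D = 0" unfolding D_def by simp
      with False show False by simp
    qed
    then obtain i where i: "i \<in> {1..N}" "t i \<noteq> 0" by blast
    have "T \<noteq> b"
    proof
      assume "T = b"
      then have X: "t (Suc N) = b" "\<And>j i. j \<in> {1..Suc N} \<Longrightarrow> t j = b \<Longrightarrow> i \<in> {1..<j} \<Longrightarrow> t i = 0"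
        using canon_low[OF Suc.prems] unfolding T_def by auto
      have "\<forall>i\<in>{1..<Suc N}. t i = 0"
      proof
        fix i assume "i \<in> {1..<Suc N}"
        then show "t i = 0" using X(2)[of "Suc N" i] X(1) by simp
      qed
      then show False using i by simp
    qed
    then have Tb: "T \<le> b - 1" using TB by simp
    have M1: "M \<ge> 1" using MD False by simp
    have A: "T * b^Suc N \<le> (b - 1) * b^Suc N" using Tb by (rule mult_right_mono) simp
    have "M + T * b^Suc N \<le> b^Suc N + (b - 1) * b^Suc N" by (rule add_mono[OF IH(1) A])
    also have "\<dots> = b^Suc (Suc N)" using assms by (simp add: algebra_simps diff_mult_distrib)
    finally have bnd: "M + T * b^Suc N \<le> b^Suc (Suc N)" .
    have e: "M + T * b^Suc N - 1 = (M - 1) + b^Suc N * T" using M1 by (simp add: algebra_simps)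
    have "ds b (M + T * b^Suc N - 1) = ds b (M - 1) + ds b T"
      unfolding e by (rule ds_shift) (use assms IH(1) M1 in auto)
    also have "\<dots> = ds b (M - 1) + T" using ds_small[OF assms(1), of T] Tb assms by simp
    finally have "D + T \<le> ds b (M + T * b^Suc N - 1)" using IH(2) False by simp
    then show ?thesis using M' D' bnd by simp
  qed
qed

lemma canon_opt: assumes "b \<ge> 2" "canon b N t"
  and "ds b (D' + (b - 1) * (\<Sum>j=1..N. t j * ee b j)) \<le> D'"
  shows "(\<Sum>j=1..N. t j) \<le> D'"
proof (rule ccontr)
  define M where "M = (\<Sum>j=1..N. t j * b^j)"
  define D where "D = (\<Sum>j=1..N. t j)"
  define g where "g = (\<Sum>j=1..N. t j * ee b j)"
  assume "\<not> (\<Sum>j=1..N. t j) \<le> D'"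
  then have lt: "D' < D" unfolding D_def by simp
  have "M = (\<Sum>j=1..N. (b - 1) * (t j * ee b j) + t j)" unfolding M_def
    by (rule sum.cong) (use ee_pow[of b] assms(1) in \<open>auto simp: algebra_simps\<close>)
  then have Meq: "M = (b - 1) * g + D" unfolding g_def D_def by (simp add: sum.distrib sum_distrib_left)
  have h: "D \<le> ds b (M - 1)" using canon_ds[OF assms(1,2)] lt unfolding M_def D_def by simp
  have "ds b (M - 1) \<le> ds b (M - (D - D')) + (D - D' - 1)"
    by (rule ds_dec) (use assms lt Meq in auto)
  moreover have "M - (D - D') = D' + (b - 1) * g" using Meq lt by simp
  ultimately show False using h assms(3) lt unfolding g_def by simp
qed


lemma R_canon: assumes "t \<in> R_set b n" shows "canon b (n+1) t"
proof -
  have "(\<forall>j\<in>{1..n+1}. t j \<le> b) \<and> (\<forall>j\<in>{1..n+1}. t j = b \<longrightarrow> (\<forall>i\<in>{1..<j}. t i = 0))"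
    using assms unfolding R_set_def mem_Collect_eq by (elim conjE) (intro conjI; assumption)
  then show ?thesis unfolding canon_def by assumption
qed

lemma s0_ee: assumes "b \<ge> 2"
  shows "(b+1)*b^n - 1 = (b - 1) * ee b (Suc n) + (b - 1) * ee b n + 1"
proof -
  have a: "b^n = (b - 1) * ee b n + 1" using ee_pow[of b n] assms by simp
  have c: "b^Suc n = (b - 1) * ee b (Suc n) + 1" using ee_pow[of b "Suc n"] assms by simp
  have "(b+1)*b^n = b^Suc n + b^n" by simp
  then show ?thesis using a c by simp
qed

lemma R_gbound: assumes "b \<ge> 2" "n \<ge> 1" "t \<in> R_set b n"
  shows "(\<Sum>j=1..n+1. t j * ee b j) < (b+1)*b^n - 1"
proof -
  obtain m where n: "n = Suc m" using assms(2) by (cases n) auto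
  define E where "E = ee b n"
  define E1 where "E1 = ee b (Suc n)"
  define L where "L = (\<Sum>j=1..m. t j * ee b j)"
  have E1E: "E1 = b * E + 1" unfolding E1_def E_def by simp
  have EL: "E = b * ee b m + 1" unfolding E_def n by simp
  have c: "canon b (n+1) t" using R_canon assms(3) by blast
  have Lb: "L \<le> b * ee b m" unfolding L_def by (rule canon_bound) (use assms c canon_mono n in auto)
  have Ln: "(\<Sum>j=1..n. t j * ee b j) \<le> b * E" unfolding E_def by (rule canon_bound) (use assms c canon_mono in auto)
  have split1: "(\<Sum>j=1..n+1. t j * ee b j) = (\<Sum>j=1..n. t j * ee b j) + t (n+1) * E1"
    by (simp add: sum.cl_ivl_Suc E1_def)
  have split2: "(\<Sum>j=1..n. t j * ee b j) = L + t n * E"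
    by (simp add: sum.cl_ivl_Suc L_def E_def n)
  have s0: "(b+1)*b^n - 1 = (b - 1) * E1 + (b - 1) * E + 1" using s0_ee[OF assms(1)] unfolding E_def E1_def .
  have tn1: "t (n+1) \<le> b - 1" using assms(3) unfolding R_set_def by simp
  have iii: "t (n+1) = b - 1 \<Longrightarrow> t n \<le> b - 1 \<and> (t n = b - 1 \<longrightarrow> (\<forall>i\<in>{1..n-1}. t i = 0))"
    using assms(3) unfolding R_set_def by simp
  have bE1: "(b - 2) * E1 + E1 = (b - 1) * E1" using assms(1) by (simp add: algebra_simps diff_mult_distrib)
  have bE: "(b - 2) * E + E = (b - 1) * E" using assms(1) by (simp add: algebra_simps diff_mult_distrib)
  have bE': "(b - 1) * E + E = b * E" using assms(1) by (simp add: algebra_simps diff_mult_distrib)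
  show ?thesis
  proof (cases "t (n+1) = b - 1")
    case False
    then have "t (n+1) \<le> b - 2" using tn1 by simp
    then have "t (n+1) * E1 \<le> (b - 2) * E1" by (rule mult_right_mono) simp
    then show ?thesis using split1 Ln s0 bE1 E1E by linarith
  next
    case True
    note iv = iii[OF True]
    show ?thesis
    proof (cases "t n = b - 1")
      case False
      then have "t n \<le> b - 2" using iv by simp
      then have "t n * E \<le> (b - 2) * E" by (rule mult_right_mono) simp
      moreover have "t (n+1) * E1 = (b - 1) * E1" using True by simp
      ultimately show ?thesis using split1 split2 Lb EL s0 bE by linarith
    next
      case tn: True
      then have "\<forall>i\<in>{1..m}. t i = 0" using iv n by simp
      then have "L = 0" unfolding L_def by simp
      then show ?thesis using split1 split2 True tn s0 by simp
    qed
  qed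
qed

lemma R_surj: assumes "b \<ge> 2" "n \<ge> 1" "g < (b+1)*b^n - 1"
  shows "\<exists>t\<in>R_set b n. (\<Sum>j=1..n+1. t j * ee b j) = g"
proof -
  obtain m where n: "n = Suc m" using assms(2) by (cases n) auto
  define E where "E = ee b n"
  define E1 where "E1 = ee b (Suc n)"
  have E1E: "E1 = b * E + 1" unfolding E1_def E_def by simp
  have EL: "E = b * ee b m + 1" unfolding E_def n by simp
  have s0: "(b+1)*b^n - 1 = (b - 1) * E1 + (b - 1) * E + 1" using s0_ee[OF assms(1)] unfolding E_def E1_def .
  have bE: "(b - 1) * E + E = b * E" using assms(1) by (simp add: algebra_simps diff_mult_distrib)
  have bE1: "(b - 1) * E1 + E1 = b * E1" using assms(1) by (simp add: algebra_simps diff_mult_distrib)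
  have E1p: "E1 \<ge> 1" using E1E by simp
  define q where "q = g div E1"
  define r where "r = g mod E1"
  have gqr: "g = q * E1 + r" unfolding q_def r_def by simp
  have "r < E1" unfolding r_def using E1p by simp
  then have "r \<le> b * E" using E1E by simp
  then obtain t0 where t0: "canon b n t0" "\<forall>j. j \<notin> {1..n} \<longrightarrow> t0 j = 0"
     and t0s: "(\<Sum>j=1..n. t0 j * ee b j) = r"
    using canon_exists[of b r n] assms(1) unfolding E_def by auto
  have "q * E1 < b * E1" using gqr assms(3) s0 E1E bE bE1 by linarith
  then have "q < b" by simp
  then have qb: "q \<le> b - 1" by linarith
  define t where "t = t0(n+1 := q)"
  have tsum: "(\<Sum>j=1..n+1. t j * ee b j) = g"
  proof -
    have "(\<Sum>j=1..n. t j * ee b j) = r" using t0s by (simp add: t_def)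
    then show ?thesis using gqr by (simp add: sum.cl_ivl_Suc t_def E1_def)
  qed
  define L where "L = (\<Sum>j=1..m. t0 j * ee b j)"
  have Lb: "L \<le> b * ee b m" unfolding L_def by (rule canon_bound) (use assms t0(1) canon_mono n in auto)
  have split2: "r = L + t0 n * E"
    using t0s by (simp add: sum.cl_ivl_Suc L_def E_def n)
  have F1: "\<forall>j. j \<notin> {1..n+1} \<longrightarrow> t j = 0"
  proof (intro allI impI)
    fix j assume "j \<notin> {1..n+1}"
    then have "j \<notin> {1..n}" "j \<noteq> n+1" by auto
    then show "t j = 0" using t0(2) by (simp add: t_def)
  qed
  have F2: "\<forall>j\<in>{1..n+1}. t j \<le> b"
  proof
    fix j assume j: "j \<in> {1..n+1}"
    show "t j \<le> b"
    proof (cases "j = n+1")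
      case True then show ?thesis using qb by (simp add: t_def)
    next
      case False
      then have "j \<in> {1..n}" using j by auto
      then show ?thesis using canon_le[OF t0(1)] False by (simp add: t_def)
    qed
  qed
  have F3: "t (n+1) \<le> b - 1" using qb by (simp add: t_def)
  have F4: "\<forall>j\<in>{1..n+1}. t j = b \<longrightarrow> (\<forall>i\<in>{1..<j}. t i = 0)"
  proof (intro ballI impI)
    fix j i assume j: "j \<in> {1..n+1}" and tj: "t j = b" and i: "i \<in> {1..<j}"
    have jn: "j \<noteq> n+1" using tj qb assms(1) by (auto simp: t_def)
    then have jN: "j \<in> {1..n}" using j by auto
    have iN: "i \<noteq> n+1" using i jN by auto
    have "t0 j = b" using tj jn by (simp add: t_def)
    then have "t0 i = 0" using canon_low[OF t0(1) jN _ i] by blast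
    then show "t i = 0" using iN by (simp add: t_def)
  qed
  have F5: "t (n+1) = b - 1 \<longrightarrow> t n \<le> b - 1 \<and> (t n = b - 1 \<longrightarrow> (\<forall>i\<in>{1..n-1}. t i = 0))"
  proof
    assume T: "t (n+1) = b - 1"
    then have qq: "q = b - 1" by (simp add: t_def)
    have "g = (b - 1) * E1 + r" using gqr qq by simp
    then have rb: "r \<le> (b - 1) * E" using assms(3) s0 by linarith
    have tn: "t n = t0 n" by (simp add: t_def)
    have "t0 n \<noteq> b"
    proof
      assume "t0 n = b"
      then have "b * E \<le> r" using split2 by simp
      then show False using rb bE EL by linarith
    qed
    moreover have "t0 n \<le> b" using canon_le[OF t0(1), of n] n by simp
    ultimately have A: "t n \<le> b - 1" using tn by simp
    have B: "t n = b - 1 \<longrightarrow> (\<forall>i\<in>{1..n-1}. t i = 0)"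
    proof
      assume "t n = b - 1"
      then have "t0 n * E = (b - 1) * E" using tn by simp
      then have "L = 0" using split2 rb by linarith
      then have "\<forall>i\<in>{1..m}. t0 i = 0" using sum_zero_e[where N=m and t=t0 and b=b] unfolding L_def by blast
      then show "\<forall>i\<in>{1..n-1}. t i = 0" using n by (simp add: t_def)
    qed
    show "t n \<le> b - 1 \<and> (t n = b - 1 \<longrightarrow> (\<forall>i\<in>{1..n-1}. t i = 0))" using A B by blast
  qed
  have "t \<in> R_set b n" unfolding R_set_def mem_Collect_eq
    by (intro conjI F1 F2 F3 F4 F5)
  then show ?thesis using tsum by blast
qed


lemma coprime_aq1: "coprime (a::nat) (a * q + 1)"
proof -
  have "gcd a (a * q + 1) = gcd a 1" by (metis gcd_add_mult mult.commute)
  then show ?thesis by (simp add: coprime_iff_gcd_eq_1)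
qed

lemma mg_add: "y \<in> monoid_gen A \<Longrightarrow> x \<in> monoid_gen A \<Longrightarrow> x + y \<in> monoid_gen A"
proof (induction y rule: monoid_gen.induct)
  case zero then show ?case by simp
next
  case (add y a)
  have "x + y \<in> monoid_gen A" using add.IH add.prems by blast
  then have "(x + y) + a \<in> monoid_gen A" using add.hyps(2) by (rule monoid_gen.add)
  then show ?case by (simp add: add.assoc)
qed

lemma mg_mult: "a \<in> A \<Longrightarrow> k * a \<in> monoid_gen A"
proof (induction k)
  case 0 then show ?case by (simp add: monoid_gen.zero)
next
  case (Suc k)
  then have "k * a + a \<in> monoid_gen A" by (intro monoid_gen.add) simp_all
  then show ?case by (simp add: add.commute)
qed

lemma mg_sum: "finite F \<Longrightarrow> (\<And>j. j \<in> F \<Longrightarrow> f j \<in> monoid_gen A) \<Longrightarrow> sum f F \<in> monoid_gen A"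
proof (induction F rule: finite_induct)
  case empty then show ?case by (simp add: monoid_gen.zero)
next
  case (insert x F)
  then show ?case by (simp add: mg_add)
qed

lemma s_dec: assumes "b \<ge> 1"
  shows "s_gen b n i = s_gen b n 0 + (b+1)*b^n*(b-1) * ee b i"
proof -
  have bi: "b^i = (b - 1) * ee b i + 1" using ee_pow assms by blast
  define P where "P = (b+1)*b^n"
  define E where "E = ee b i"
  define c where "c = b - 1"
  have bn: "b^n \<ge> 1" using assms by simp
  have P: "P \<ge> 1" unfolding P_def using mult_le_mono[OF _ bn, of 1 "b+1"] by simp
  have "s_gen b n i = P*b^i - 1" unfolding s_gen_def P_def by (simp add: power_add algebra_simps)
  also have "\<dots> = P*c*E + (P - 1)" unfolding bi c_def[symmetric] E_def[symmetric] using P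
    by (simp add: algebra_simps)
  finally show ?thesis unfolding s_gen_def P_def c_def E_def by simp
qed

lemma S_char: assumes "b \<ge> 2" "x \<in> T_sg b n"
  shows "\<exists>D G. x = s_gen b n 0 * D + (b+1)*b^n*(b-1) * G \<and> ds b (D + (b - 1) * G) \<le> D"
  using assms(2) unfolding T_sg_def
proof (induction x rule: monoid_gen.induct)
  case zero then show ?case by (intro exI[of _ 0]) simp
next
  case (add x a)
  obtain D G where DG: "x = s_gen b n 0 * D + (b+1)*b^n*(b-1) * G" "ds b (D + (b - 1) * G) \<le> D"
    using add.IH by blast
  obtain i where a: "a = s_gen b n i" using add.hyps(2) by auto
  have bi: "b^i = (b - 1) * ee b i + 1" using ee_pow assms(1) by simp
  define K where "K = (b+1)*b^n*(b-1)"
  define s0 where "s0 = s_gen b n 0"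
  have "x + a = s0 * D + K * G + (s0 + K * ee b i)"
    using DG(1) s_dec[of b n i] assms(1) a unfolding K_def s0_def by simp
  also have "\<dots> = s0 * (D + 1) + K * (G + ee b i)" by (simp add: algebra_simps)
  finally have X: "x + a = s_gen b n 0 * (D + 1) + (b+1)*b^n*(b-1) * (G + ee b i)"
    unfolding K_def s0_def .
  have e: "D + 1 + (b - 1) * (G + ee b i) = (D + (b - 1) * G) + b^i"
    unfolding bi by (simp add: algebra_simps)
  have "ds b ((D + (b - 1) * G) + b^i) \<le> D + 1"
    using ds_pow[OF assms(1), of "D + (b - 1) * G" i] DG(2) by linarith
  then have Y: "ds b (D + 1 + (b - 1) * (G + ee b i)) \<le> D + 1" unfolding e .
  show ?case using X Y by blast
qed


lemma dvd_P2: fixes b n :: nat assumes "b \<ge> 2" shows "(b - 1) dvd ((b+1)*b^n - 2)"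
proof (induction n)
  case 0 then show ?case using assms by simp
next
  case (Suc n)
  have bn: "b^n \<ge> 1" using assms by simp
  have P2: "(b+1)*b^n \<ge> 2" using mult_le_mono[OF _ bn, of 2 "b+1"] assms by simp
  obtain R where R: "(b+1)*b^n = R + 2" using P2 by (metis le_add_diff_inverse2)
  obtain c where c: "b = c + 1" using assms by (metis add.commute le_add_diff_inverse le_trans one_le_numeral)
  have "(b+1)*b^Suc n - 2 = b * ((b+1)*b^n) - 2" by (simp add: algebra_simps)
  also have "\<dots> = b * ((b+1)*b^n - 2) + (b - 1) * 2" unfolding R unfolding c by (simp add: algebra_simps)
  finally have "(b+1)*b^Suc n - 2 = b * ((b+1)*b^n - 2) + (b - 1) * 2" .
  then show ?case using Suc by simp
qed

lemma cop_K: fixes b n :: nat assumes "b \<ge> 2" shows "coprime ((b+1)*b^n*(b-1)) ((b+1)*b^n - 1)"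
proof -
  define P where "P = (b+1)*b^n"
  have bn: "b^n \<ge> 1" using assms by simp
  have P2: "P \<ge> 2" unfolding P_def using mult_le_mono[OF _ bn, of 2 "b+1"] assms by simp
  have c1: "coprime P (P - 1)" using P2 coprime_add_one_left[of "P - 1"] by simp
  obtain q where q: "P - 2 = (b - 1) * q" using dvd_P2[OF assms, of n] unfolding P_def by auto
  have "P - 1 = (b - 1) * q + 1" using q P2 by simp
  then have c2: "coprime (b - 1) (P - 1)" using coprime_aq1 by simp
  show ?thesis using c1 c2 unfolding P_def by simp
qed

lemma D_bound: assumes "b \<ge> 2" "t \<in> R_set b n" shows "(\<Sum>j=1..n+1. t j) < (b+1)*b^n"
proof -
  have "(\<Sum>j=1..n+1. t j) \<le> card {1..n+1} * b"
    using sum_bounded_above[of "{1..n+1}" t b] canon_le[OF R_canon[OF assms(2)]] by simp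
  then have a: "(\<Sum>j=1..n+1. t j) \<le> (n+1) * b" by simp
  have "(2::nat)^n \<le> b^n" using assms(1) by (rule power_mono) simp
  then have "n + 1 \<le> b^n" using less_exp[of n] by linarith
  then have "(n+1) * b \<le> b^n * b" by (rule mult_right_mono) simp
  also have "\<dots> < (b+1)*b^n" using assms by simp
  finally show ?thesis using a by linarith
qed

theorem mainTheorem3:
  fixes b n :: nat
  assumes "b \<ge> 2" and "n \<ge> 1"
  shows "Apery (T_sg b n) (s_gen b n 0) =
           {\<Sum>j=1..n+1. t j * s_gen b n j | t. t \<in> R_set b n}"
proof -
  define P where "P = (b+1)*b^n"
  define s0 where "s0 = s_gen b n 0"
  define K where "K = (b+1)*b^n*(b-1)"
  define S where "S = T_sg b n"
  have s0P: "s0 = (b+1)*b^n - 1" by (simp add: s0_def s_gen_def)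
  have bn: "b^n \<ge> 1" using assms by simp
  have P2: "P \<ge> 2" unfolding P_def using mult_le_mono[OF _ bn, of 2 "b+1"] assms by simp
  have s0pos: "s0 > 0" using P2 s0P unfolding P_def by simp
  have KPe: "K = P * (b - 1)" unfolding K_def P_def ..
  have "P * 1 \<le> P * (b - 1)" by (rule mult_le_mono2) (use assms in simp)
  then have KP: "P \<le> K" unfolding KPe by simp
  have sdec: "\<And>i. s_gen b n i = s0 + K * ee b i" unfolding s0_def K_def by (rule s_dec) (use assms in simp)
  have val: "(\<Sum>j=1..n+1. t j * s_gen b n j) = s0 * (\<Sum>j=1..n+1. t j) + K * (\<Sum>j=1..n+1. t j * ee b j)" for t
  proof -
    have "(\<Sum>j=1..n+1. t j * s_gen b n j) = (\<Sum>j=1..n+1. s0 * t j + K * (t j * ee b j))"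
      by (rule sum.cong) (simp_all only: sdec distrib_left mult.commute mult.left_commute)
    then show ?thesis by (simp only: sum.distrib sum_distrib_left)
  qed
  have genS: "s_gen b n i \<in> S" for i
  proof -
    have "0 + s_gen b n i \<in> monoid_gen (range (s_gen b n))"
      by (rule monoid_gen.add[OF monoid_gen.zero]) simp
    then show ?thesis unfolding S_def T_sg_def by simp
  qed
  have inS: "\<And>t. (\<Sum>j=1..n+1. t j * s_gen b n j) \<in> S"
    unfolding S_def T_sg_def by (rule mg_sum) (auto intro: mg_mult)
  have s0S: "s0 \<in> S" using genS unfolding s0_def by simp
  have s0kS: "\<And>k. s0 * k \<in> S" using mg_mult[of s0 "range (s_gen b n)"] unfolding S_def T_sg_def s0_def
    by (simp add: mult.commute)
  have addS: "\<And>x y. x \<in> S \<Longrightarrow> y \<in> S \<Longrightarrow> x + y \<in> S" unfolding S_def T_sg_def using mg_add by blast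
  have Dlt: "\<And>t. t \<in> R_set b n \<Longrightarrow> (\<Sum>j=1..n+1. t j) < P" using D_bound[OF assms(1)] unfolding P_def by blast
  have glt: "\<And>t. t \<in> R_set b n \<Longrightarrow> (\<Sum>j=1..n+1. t j * ee b j) < s0" using R_gbound[OF assms] s0P by simp
  have cop: "coprime K s0" using cop_K[OF assms(1)] unfolding K_def s0P .
  have char: "\<And>x. x \<in> S \<Longrightarrow> \<exists>D G. x = s0 * D + K * G \<and> ds b (D + (b - 1) * G) \<le> D"
    using S_char[OF assms(1)] unfolding S_def s0_def K_def by blast
  have opt: "\<And>t D'. t \<in> R_set b n \<Longrightarrow> ds b (D' + (b - 1) * (\<Sum>j=1..n+1. t j * ee b j)) \<le> D' \<Longrightarrow> (\<Sum>j=1..n+1. t j) \<le> D'"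
    using canon_opt[OF assms(1) R_canon] by blast
  show ?thesis
    unfolding s0_def[symmetric] S_def[symmetric]
  proof (intro equalityI subsetI)
    fix x assume "x \<in> Apery S s0"
    then have xS: "x \<in> S" and nx: "\<not> (s0 \<le> x \<and> x - s0 \<in> S)" unfolding Apery_def by auto
    obtain D G where DG: "x = s0 * D + K * G" "ds b (D + (b - 1) * G) \<le> D" using char[OF xS] by blast
    define g0 where "g0 = G mod s0"
    define m where "m = G div s0"
    have Gm: "G = g0 + s0 * m" unfolding g0_def m_def by simp
    have "g0 < s0" unfolding g0_def using s0pos by simp
    then obtain t where t: "t \<in> R_set b n" "(\<Sum>j=1..n+1. t j * ee b j) = g0"
      using R_surj[OF assms] s0P by auto
    define Dt where "Dt = (\<Sum>j=1..n+1. t j)"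
    have DtD: "Dt \<le> D + K * m"
    proof (cases "m = 0")
      case True
      then have "G = g0" using Gm by simp
      then have "Dt \<le> D" using opt[OF t(1), of D] DG(2) t(2) unfolding Dt_def by simp
      then show ?thesis by simp
    next
      case False
      have "Dt < P" using Dlt[OF t(1)] unfolding Dt_def .
      moreover have "K \<le> K * m" using False by simp
      ultimately show ?thesis using KP by linarith
    qed
    define k where "k = D + K * m - Dt"
    have vt: "(\<Sum>j=1..n+1. t j * s_gen b n j) = s0 * Dt + K * g0" using val t(2) unfolding Dt_def by simp
    have xk: "x = (\<Sum>j=1..n+1. t j * s_gen b n j) + s0 * k"
    proof -
      have "x = s0 * (D + K * m) + K * g0" using DG(1) Gm by (simp add: algebra_simps)
      also have "D + K * m = Dt + k" using DtD unfolding k_def by simp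
      finally show ?thesis using vt by (simp add: algebra_simps)
    qed
    have "k = 0"
    proof (rule ccontr)
      assume "k \<noteq> 0"
      then obtain k' where k': "k = Suc k'" by (cases k) auto
      define V where "V = (\<Sum>j=1..n+1. t j * s_gen b n j)"
      have "x = (V + s0 * k') + s0" using xk k' unfolding V_def by simp
      then have "x - s0 = (\<Sum>j=1..n+1. t j * s_gen b n j) + s0 * k'" "s0 \<le> x"
        unfolding V_def by simp_all
      then have "s0 \<le> x \<and> x - s0 \<in> S" using addS[OF inS s0kS] by simp
      then show False using nx by blast
    qed
    then have "x = (\<Sum>j=1..n+1. t j * s_gen b n j)" using xk by simp
    then show "x \<in> {\<Sum>j=1..n+1. t j * s_gen b n j | t. t \<in> R_set b n}" using t(1) by blast
  next
    fix x assume "x \<in> {\<Sum>j=1..n+1. t j * s_gen b n j | t. t \<in> R_set b n}"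
    then obtain t where t: "t \<in> R_set b n" "x = (\<Sum>j=1..n+1. t j * s_gen b n j)" by blast
    define Dt where "Dt = (\<Sum>j=1..n+1. t j)"
    define g where "g = (\<Sum>j=1..n+1. t j * ee b j)"
    have xv: "x = s0 * Dt + K * g" using val t(2) unfolding Dt_def g_def by simp
    have gs: "g < s0" using glt[OF t(1)] unfolding g_def .
    have DtP: "Dt < P" using Dlt[OF t(1)] unfolding Dt_def .
    have "\<not> (s0 \<le> x \<and> x - s0 \<in> S)"
    proof
      assume A: "s0 \<le> x \<and> x - s0 \<in> S"
      obtain D G where DG: "x - s0 = s0 * D + K * G" "ds b (D + (b - 1) * G) \<le> D"
        using char A by blast
      have "x = s0 * D + K * G + s0" using DG(1) A by linarith
      then have eq: "s0 * Dt + K * g = s0 * (D + 1) + K * G" using xv by (simp add: algebra_simps)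
      have "(K * g) mod s0 = (s0 * Dt + K * g) mod s0" by simp
      also have "\<dots> = (s0 * (D + 1) + K * G) mod s0" using eq by simp
      also have "\<dots> = (K * G + s0 * (D + 1)) mod s0" by (simp add: add.commute)
      also have "\<dots> = (K * G) mod s0" by (rule mod_mult_self2)
      finally have "[K * g = K * G] (mod s0)" unfolding cong_def .
      then have "[g = G] (mod s0)" using cong_mult_lcancel_nat[OF cop] by simp
      then have "G mod s0 = g" using gs unfolding cong_def by simp
      then have Gm: "G = g + s0 * (G div s0)" by (metis mod_mult_div_eq)
      define m where "m = G div s0"
      have Gm': "G = g + s0 * m" using Gm unfolding m_def .
      have KG: "K * G = K * g + s0 * (K * m)" by (subst Gm') (simp add: algebra_simps)
      have dl: "s0 * (D + 1 + K * m) = s0 * (D + 1) + s0 * (K * m)" by (simp add: algebra_simps)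
      have "s0 * Dt + K * g = s0 * (D + 1 + K * m) + K * g" using eq KG dl by linarith
      then have "s0 * Dt = s0 * (D + 1 + K * m)" by simp
      then have Dt: "Dt = D + 1 + K * m" using s0pos by (metis mult_cancel1 not_gr0)
      have "m = 0"
      proof (rule ccontr)
        assume "m \<noteq> 0"
        then have "K \<le> K * m" by simp
        then show False using Dt DtP KP by linarith
      qed
      then have "G = g" "Dt = D + 1" using Gm Dt unfolding m_def by auto
      then have "Dt \<le> D" using opt[OF t(1), of D] DG(2) unfolding Dt_def g_def by simp
      then show False using \<open>Dt = D + 1\<close> by simp
    qed
    then show "x \<in> Apery S s0" unfolding Apery_def using inS t(2) by blast
  qed
qed

end
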